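(* Let $\gamma, \gamma_1$ be disjoint geodesics in $\mathbb{H}^3$ with common orthogonal $\eta$, and let their complex distance be $d_{\mathbb{C}}(\gamma,\gamma_1) = d + i\theta$, where $d>0$ is the length of $\eta$ and $\theta$ is a real representative of the angle, with $\theta \le \pi/2$. Let $P$ be the plane containing $\gamma$ and $\eta$. Let $y_1$ be a point of $\gamma_1$ and let $P_1$ be the plane containing $\gamma$ and $y_1$. Then the dihedral angle between $P$ and $P_1$ is at most $|\theta|/d$.
   Context: The complex distance $d+i\theta$ between two disjoint geodesics with common orthogonal $\eta$ has real part the length of $\eta$ and imaginary part the angle between $\gamma_1$ and the parallel transport along $\eta$ of the tangent direction of $\gamma$. *)

theory Defs
  imports "HOL-Analysis.Analysis"
begin

text \<open>Hyperboloid model of hyperbolic 3-space inside R^4 (coordinate 1 is timelike).\<close>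

definition mink :: "real^4 \<Rightarrow> real^4 \<Rightarrow> real" where
  "mink x y = - (x$1 * y$1) + x$2 * y$2 + x$3 * y$3 + x$4 * y$4"

definition H3 :: "(real^4) set" where
  "H3 = {x. mink x x = -1 \<and> x$1 > 0}"

definition hdist :: "real^4 \<Rightarrow> real^4 \<Rightarrow> real" where
  "hdist x y = arcosh (- mink x y)"

text \<open>The complete geodesic through p with unit tangent vector v at p
  (requires p in H3, mink p v = 0, mink v v = 1).\<close>
definition geod :: "real^4 \<Rightarrow> real^4 \<Rightarrow> (real^4) set" where
  "geod p v = range (\<lambda>t::real. cosh t *\<^sub>R p + sinh t *\<^sub>R v)"

definition hseg :: "real^4 \<Rightarrow> real^4 \<Rightarrow> (real^4) set" where
  "hseg a b = {x \<in> H3. \<exists>\<alpha> \<beta>. \<alpha> \<ge> 0 \<and> \<beta> \<ge> 0 \<and> x = \<alpha> *\<^sub>R a + \<beta> *\<^sub>R b}"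

text \<open>(Unnormalised) tangent vector at a of the geodesic segment from a to b.\<close>
definition seg_dir :: "real^4 \<Rightarrow> real^4 \<Rightarrow> real^4" where
  "seg_dir a b = b + mink a b *\<^sub>R a"

text \<open>Parallel transport along the geodesic from a to b of a tangent vector X at a.\<close>
definition ptrans :: "real^4 \<Rightarrow> real^4 \<Rightarrow> real^4 \<Rightarrow> real^4" where
  "ptrans a b X = X + (mink b X / (1 - mink a b)) *\<^sub>R (a + b)"

definition plane_normal :: "(real^4) set \<Rightarrow> real^4 \<Rightarrow> bool" where
  "plane_normal P n \<longleftrightarrow> mink n n > 0 \<and> P = {x \<in> H3. mink n x = 0}"

definition is_plane :: "(real^4) set \<Rightarrow> bool" where
  "is_plane P \<longleftrightarrow> (\<exists>n. plane_normal P n)"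

definition dihedral_angle :: "(real^4) set \<Rightarrow> (real^4) set \<Rightarrow> real" where
  "dihedral_angle P Q =
     (let n = (SOME n. plane_normal P n); m = (SOME m. plane_normal Q m)
      in arccos (\<bar>mink n m\<bar> / sqrt (mink n n * mink m m)))"

end

theory Submission
  imports Defs
begin

lemma mink_sym: "mink x y = mink y x" unfolding mink_def by simp
lemma mink_add_l: "mink (x + y) z = mink x z + mink y z" unfolding mink_def by (simp add: algebra_simps)
lemma mink_add_r: "mink z (x + y) = mink z x + mink z y" unfolding mink_def by (simp add: algebra_simps)
lemma mink_diff_l: "mink (x - y) z = mink x z - mink y z" unfolding mink_def by (simp add: algebra_simps)
lemma mink_diff_r: "mink z (x - y) = mink z x - mink z y" unfolding mink_def by (simp add: algebra_simps)
lemma mink_scale_l: "mink (c *\<^sub>R x) z = c * mink x z" unfolding mink_def by (simp add: algebra_simps)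
lemma mink_scale_r: "mink z (c *\<^sub>R x) = c * mink z x" unfolding mink_def by (simp add: algebra_simps)
lemma mink_zero_l: "mink 0 z = 0" unfolding mink_def by simp
lemma mink_zero_r: "mink z 0 = 0" unfolding mink_def by simp

lemmas mink_lin = mink_add_l mink_add_r mink_diff_l mink_diff_r mink_scale_l mink_scale_r mink_zero_l mink_zero_r

definition Lm :: "real^4 \<Rightarrow> real^4 \<Rightarrow> real^4 \<Rightarrow> real^4 \<Rightarrow> real^4 \<Rightarrow> real^4" where
  "Lm p q r n v = (\<chi> i. if i = 1 then mink p v else if i = 2 then mink q v else if i = 3 then mink r v else mink n v)"

lemma Lm_comp: "Lm p q r n v $ 1 = mink p v" "Lm p q r n v $ 2 = mink q v" "Lm p q r n v $ 3 = mink r v" "Lm p q r n v $ 4 = mink n v"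
  unfolding Lm_def by simp_all

lemma Lm_linear: "linear (Lm p q r n)"
  by (rule linearI) (simp_all add: vec_eq_iff forall_4 Lm_comp mink_lin)

lemma perp_zero:
  assumes "mink p p = -1" "mink q q = 1" "mink r r > 0" "mink n n > 0"
    "mink p q = 0" "mink p r = 0" "mink q r = 0" "mink p n = 0" "mink q n = 0" "mink r n = 0"
    and v: "mink v p = 0" "mink v q = 0" "mink v r = 0" "mink v n = 0"
  shows "v = 0"
proof -
  have surj: "surj (Lm p q r n)"
  proof (rule surjI)
    fix y :: "real^4"
    show "Lm p q r n ((- (y$1)) *\<^sub>R p + (y$2) *\<^sub>R q + (y$3 / mink r r) *\<^sub>R r + (y$4 / mink n n) *\<^sub>R n) = y"
      using assms by (simp add: vec_eq_iff forall_4 Lm_comp mink_lin mink_sym[of q p] mink_sym[of r p]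
          mink_sym[of r q] mink_sym[of n p] mink_sym[of n q] mink_sym[of n r])
  qed
  have "inj (Lm p q r n)"
    using linear_surj_imp_inj[OF Lm_linear surj] .
  moreover have "Lm p q r n v = Lm p q r n 0"
    using v by (simp add: vec_eq_iff forall_4 Lm_comp mink_lin mink_sym)
  ultimately show ?thesis by (simp add: inj_eq)
qed

lemma decomp:
  assumes "mink p p = -1" "mink q q = 1" "mink r r > 0" "mink n n > 0"
    "mink p q = 0" "mink p r = 0" "mink q r = 0" "mink p n = 0" "mink q n = 0" "mink r n = 0"
  shows "x = (- mink x p) *\<^sub>R p + mink x q *\<^sub>R q + (mink x r / mink r r) *\<^sub>R r + (mink x n / mink n n) *\<^sub>R n"
proof -
  let ?v = "x - ((- mink x p) *\<^sub>R p + mink x q *\<^sub>R q + (mink x r / mink r r) *\<^sub>R r + (mink x n / mink n n) *\<^sub>R n)"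
  have "?v = 0"
    by (rule perp_zero[OF assms]) (use assms in \<open>simp_all add: mink_lin mink_sym[of q p] mink_sym[of r p]
          mink_sym[of r q] mink_sym[of n p] mink_sym[of n q] mink_sym[of n r]\<close>)
  then show ?thesis by simp
qed

lemma diff_eq_nonneg: "x - y = z \<Longrightarrow> 0 \<le> z \<Longrightarrow> y \<le> (x::real)" by simp

lemma rev_cs:
  assumes "a \<in> H3" "b \<in> H3" shows "- mink a b \<ge> 1"
proof -
  have ha: "a$1^2 = 1 + a$2^2 + a$3^2 + a$4^2" "a$1 > 0" using assms(1) unfolding H3_def mink_def by (auto simp: power2_eq_square)
  have hb: "b$1^2 = 1 + b$2^2 + b$3^2 + b$4^2" "b$1 > 0" using assms(2) unfolding H3_def mink_def by (auto simp: power2_eq_square)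
  define s where "s = a$2*b$2 + a$3*b$3 + a$4*b$4"
  have "(a$1*b$1)^2 - (1 + s)^2 = (a$2-b$2)^2 + (a$3-b$3)^2 + (a$4-b$4)^2
     + (a$2*b$3 - a$3*b$2)^2 + (a$2*b$4 - a$4*b$2)^2 + (a$3*b$4 - a$4*b$3)^2"
    unfolding s_def power_mult_distrib ha(1) hb(1) by (simp add: algebra_simps power2_eq_square)
  moreover have "0 \<le> (a$2-b$2)^2 + (a$3-b$3)^2 + (a$4-b$4)^2
     + (a$2*b$3 - a$3*b$2)^2 + (a$2*b$4 - a$4*b$2)^2 + (a$3*b$4 - a$4*b$3)^2"
    by (intro add_nonneg_nonneg zero_le_power2)
  ultimately have "(1 + s)^2 \<le> (a$1*b$1)^2" by (rule diff_eq_nonneg)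
  moreover have "0 \<le> a$1*b$1" using ha(2) hb(2) by simp
  ultimately have "1 + s \<le> a$1*b$1" by (rule power2_le_imp_le)
  then show ?thesis unfolding mink_def s_def by simp
qed

lemma sinh_ge: "0 \<le> (x::real) \<Longrightarrow> x \<le> sinh x"
  using real_le_x_sinh[of x] by (simp add: sinh_def exp_minus)

lemma arccos_bound:
  fixes c T :: real
  assumes "0 \<le> c" "c \<le> 1" "0 \<le> T" "1 - c^2 \<le> T^2 * c^2"
  shows "arccos c \<le> T"
proof -
  define \<alpha> where "\<alpha> = arccos c"
  have a0: "0 \<le> \<alpha>" "\<alpha> \<le> pi/2" using assms arccos_le_pi2 arccos_lbound unfolding \<alpha>_def by auto
  have cc: "cos \<alpha> = c" using assms unfolding \<alpha>_def by simp
  have ss: "sin \<alpha> = sqrt (1 - c^2)" using assms unfolding \<alpha>_def by (simp add: sin_arccos)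
  have cpos: "c > 0" proof (rule ccontr) assume "\<not> c > 0" then have "c = 0" using assms by simp
    then show False using assms(4) by simp qed
  then have "\<alpha> < pi/2" using a0 cc by (metis cos_pi_half order_le_less less_irrefl)
  have "sin \<alpha> \<le> T * c"
  proof -
    have "sqrt (1 - c^2) \<le> sqrt ((T*c)^2)" using assms(4) by (simp add: power_mult_distrib)
    then show ?thesis using ss assms cpos by simp
  qed
  then have "tan \<alpha> \<le> T" using cc cpos by (simp add: tan_def divide_simps mult.commute)
  then have "arctan (tan \<alpha>) \<le> arctan T" by (simp add: arctan_le_iff)
  then have "\<alpha> \<le> arctan T" using arctan_tan[of \<alpha>] a0 \<open>\<alpha> < pi/2\<close> by simp
  also have "\<dots> \<le> T" using assms(3) by (rule arctan_le_self)
  finally show ?thesis unfolding \<alpha>_def .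
qed

theorem lemma4p5:
  fixes a u b u1 y1 :: "real^4" and d \<theta> :: real
    and \<gamma> \<gamma>1 P P1 :: "(real^4) set"
  assumes a: "a \<in> H3" "mink a u = 0" "mink u u = 1" "\<gamma> = geod a u"
      and b: "b \<in> H3" "mink b u1 = 0" "mink u1 u1 = 1" "\<gamma>1 = geod b u1"
      and disj: "\<gamma> \<inter> \<gamma>1 = {}"
      and orth: "mink (seg_dir a b) u = 0" "mink (seg_dir b a) u1 = 0"
      and cdist: "d = hdist a b" "d > 0" "cos \<theta> = mink u1 (ptrans a b u)" "\<theta> \<le> pi / 2"
      and P: "is_plane P" "\<gamma> \<subseteq> P" "hseg a b \<subseteq> P"
      and P1: "y1 \<in> \<gamma>1" "is_plane P1" "\<gamma> \<subseteq> P1" "y1 \<in> P1"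
  shows "dihedral_angle P P1 \<le> \<bar>\<theta>\<bar> / d"
proof -
  have aH: "mink a a = -1" using a(1) unfolding H3_def by simp
  have bH: "mink b b = -1" using b(1) unfolding H3_def by simp
  define ch where "ch = - mink a b"
  have ch1: "ch \<ge> 1" using rev_cs a(1) b(1) ch_def by simp
  have chne: "ch \<noteq> 1"
  proof
    assume "ch = 1" then have "d = 0" using cdist(1) unfolding hdist_def ch_def by simp
    with cdist(2) show False by simp
  qed
  have coshd: "cosh d = ch" using cdist(1) ch1 unfolding hdist_def ch_def by simp
  have Wd: "sinh d ^ 2 = ch^2 - 1" using coshd sinh_square_eq[of d] by simp
  have bu: "mink b u = 0" using orth(1) a(2) unfolding seg_dir_def by (simp add: mink_lin)
  have au1: "mink a u1 = 0" using orth(2) b(2) unfolding seg_dir_def by (simp add: mink_lin)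
  have cth: "cos \<theta> = mink u1 u" using cdist(3) bu unfolding ptrans_def by (simp add: mink_lin mink_sym[of u b])
  define w where "w = b + mink a b *\<^sub>R a"
  have aw: "mink a w = 0" using aH by (simp add: w_def mink_lin)
  have uw: "mink u w = 0" using a(2) bu by (simp add: w_def mink_lin mink_sym[of u b] mink_sym[of u a])
  have ww: "mink w w = ch^2 - 1" using aH bH
    by (simp add: w_def mink_lin mink_sym[of b a] ch_def power2_eq_square algebra_simps)
  define W where "W = mink w w"
  have Wpos: "W > 0" unfolding W_def ww using ch1 chne
    by (simp add: power2_eq_square) (smt (verit) mult_less_cancel_right1)
  have Wsd: "W = sinh d ^ 2" using Wd ww W_def by simp
  define n where "n = (SOME n. plane_normal P n)"
  have nP: "plane_normal P n" using P(1) unfolding is_plane_def n_def by (metis someI_ex)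
  define m where "m = (SOME m. plane_normal P1 m)"
  have mP: "plane_normal P1 m" using P1(2) unfolding is_plane_def m_def by (metis someI_ex)
  define N where "N = mink n n"
  define M where "M = mink m m"
  have Npos: "N > 0" using nP unfolding plane_normal_def N_def by simp
  have Mpos: "M > 0" using mP unfolding plane_normal_def M_def by simp
  have Peq: "P = {x \<in> H3. mink n x = 0}" using nP unfolding plane_normal_def by simp
  have P1eq: "P1 = {x \<in> H3. mink m x = 0}" using mP unfolding plane_normal_def by simp
  have gam: "cosh t *\<^sub>R a + sinh t *\<^sub>R u \<in> \<gamma>" for t unfolding a(4) geod_def by simp
  have ag: "a \<in> \<gamma>" using gam[of 0] by simp
  have g1: "cosh 1 *\<^sub>R a + sinh 1 *\<^sub>R u \<in> \<gamma>" using gam[of 1] .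
  have bseg: "b \<in> hseg a b" unfolding hseg_def using b(1)
  proof (intro CollectI conjI)
    show "\<exists>\<alpha> \<beta>. \<alpha> \<ge> 0 \<and> \<beta> \<ge> 0 \<and> b = \<alpha> *\<^sub>R a + \<beta> *\<^sub>R b"
      by (rule exI[of _ 0], rule exI[of _ 1]) simp
  qed
  have na: "mink n a = 0" using ag P(2) Peq by blast
  have "mink n (cosh 1 *\<^sub>R a + sinh 1 *\<^sub>R u) = 0" using g1 P(2) Peq by blast
  then have nu: "mink n u = 0" using na by (simp add: mink_lin)
  have nb: "mink n b = 0" using bseg P(3) Peq by blast
  have nw: "mink n w = 0" using na nb by (simp add: w_def mink_lin)
  have ma: "mink m a = 0" using ag P1(3) P1eq by blast
  have "mink m (cosh 1 *\<^sub>R a + sinh 1 *\<^sub>R u) = 0" using g1 P1(3) P1eq by blast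
  then have mu: "mink m u = 0" using ma by (simp add: mink_lin)
  have my: "mink m y1 = 0" using P1(4) P1eq by blast
  obtain s where ys: "y1 = cosh s *\<^sub>R b + sinh s *\<^sub>R u1" using P1(1) unfolding b(4) geod_def by blast
  have Dx: "x = (- mink x a) *\<^sub>R a + mink x u *\<^sub>R u + (mink x w / W) *\<^sub>R w + (mink x n / N) *\<^sub>R n" for x
    unfolding W_def N_def
    by (rule decomp) (use aH a(2,3) aw uw Wpos Npos na nu nw in \<open>simp_all add: W_def N_def mink_sym\<close>)
  define z where "z = u1 - cos \<theta> *\<^sub>R u"
  have za: "mink z a = 0" using au1 a(2) by (simp add: z_def mink_lin mink_sym)
  have zu: "mink z u = 0" using cth a(3) by (simp add: z_def mink_lin)
  have zw: "mink z w = 0" using au1 a(2) bu b(2) by (simp add: z_def w_def mink_lin mink_sym)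
  have zz: "mink z z = 1 - (cos \<theta>)^2" using cth a(3) b(3)
    by (simp add: z_def mink_lin mink_sym[of u u1] power2_eq_square algebra_simps)
  define Z where "Z = mink z n"
  have zeq: "z = (Z / N) *\<^sub>R n" unfolding Z_def by (rule trans[OF Dx[of z]]) (simp add: za zu zw)
  have "mink z z = (Z/N)^2 * N" by (subst (1 2) zeq) (simp add: mink_lin N_def power2_eq_square)
  then have "Z^2 = N * mink z z" using Npos by (simp add: field_simps power2_eq_square)
  then have Z2: "Z^2 = N * (sin \<theta>)^2" using zz by (simp add: sin_squared_eq)
  define A where "A = mink m w"
  define B where "B = mink m n"
  have meq: "m = (A / W) *\<^sub>R w + (B / N) *\<^sub>R n" unfolding A_def B_def by (rule trans[OF Dx[of m]]) (simp add: ma mu)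
  have Meq: "M = A^2 / W + B^2 / N"
    unfolding M_def by (subst (1 2) meq) (use Wpos Npos nw in \<open>simp add: mink_lin N_def W_def mink_sym[of w n] power2_eq_square\<close>)
  have mb: "mink m b = A" using ma by (simp add: A_def w_def mink_lin)
  have mu1: "mink m u1 = (Z / N) * B"
  proof -
    have "u1 = z + cos \<theta> *\<^sub>R u" by (simp add: z_def)
    then have "mink m u1 = mink m z" using mu by (simp add: mink_lin)
    also have "\<dots> = (Z / N) * B" by (subst zeq) (simp add: mink_lin B_def)
    finally show ?thesis .
  qed
  have yeq: "cosh s * A + sinh s * (Z / N) * B = 0" using my ys mb mu1 by (simp add: mink_lin)
  have chs: "cosh s > 0" by (simp add: cosh_real_pos)
  have cA: "cosh s * A = - (sinh s * Z * B / N)" using yeq by simp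
  have "(cosh s)^2 * (N * A^2) = N * (cosh s * A)^2" by (simp add: power_mult_distrib)
  also have "\<dots> = (sinh s)^2 * Z^2 * B^2 / N" using Npos unfolding cA by (simp add: power2_eq_square field_simps)
  also have "\<dots> = (sinh s)^2 * (sin \<theta>)^2 * B^2" using Npos unfolding Z2 by simp
  also have "\<dots> \<le> (cosh s)^2 * ((sin \<theta>)^2 * B^2)"
  proof -
    have "(sinh s)^2 \<le> (cosh s)^2" using cosh_square_eq[of s] by simp
    then show ?thesis by (simp add: mult_right_mono mult.assoc)
  qed
  finally have NA: "N * A^2 \<le> (sin \<theta>)^2 * B^2" using chs by simp
  have NMB: "N * M - B^2 = N * A^2 / W" using Npos Wpos unfolding Meq by (simp add: field_simps)
  have dW: "d^2 \<le> W" unfolding Wsd using sinh_ge[of d] cdist(2) by (simp add: power_mono)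
  have d2: "d^2 > 0" using cdist(2) by simp
  have "N * M - B^2 \<le> (sin \<theta>)^2 * B^2 / W" unfolding NMB using Wpos NA by (simp add: divide_right_mono)
  also have "\<dots> \<le> \<theta>^2 * B^2 / d^2"
  proof -
    have "(sin \<theta>)^2 \<le> \<theta>^2" using abs_sin_x_le_abs_x[of \<theta>]
      by (metis abs_ge_zero power2_abs power_mono)
    then have "(sin \<theta>)^2 * B^2 \<le> \<theta>^2 * B^2" by (simp add: mult_right_mono)
    moreover have "(sin \<theta>)^2 * B^2 / W \<le> (sin \<theta>)^2 * B^2 / d^2"
      by (rule divide_left_mono) (use dW d2 Wpos in auto)
    ultimately show ?thesis using d2 by (smt (verit) divide_right_mono)
  qed
  finally have key: "N * M - B^2 \<le> \<theta>^2 * B^2 / d^2" .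
  have NMpos: "N * M > 0" using Npos Mpos by simp
  define c where "c = \<bar>B\<bar> / sqrt (N * M)"
  have NA0: "0 \<le> N * A^2 / W" using Npos Wpos by simp
  have c0: "0 \<le> c" unfolding c_def using NMpos by simp
  have c2: "c^2 = B^2 / (N * M)" unfolding c_def using NMpos by (simp add: power_divide)
  have c1: "c \<le> 1"
  proof -
    have "B^2 \<le> N * M" using NMB NA0 by simp
    then have "c^2 \<le> 1" unfolding c2 using NMpos by simp
    then show ?thesis using one_less_power[of c 2] by linarith
  qed
  have "1 - c^2 \<le> (\<bar>\<theta>\<bar> / d)^2 * c^2"
  proof -
    have "(1 - c^2) * (N * M) = N * M - B^2" unfolding c2 using Npos Mpos by (simp add: field_simps)
    also have "\<dots> \<le> \<theta>^2 * B^2 / d^2" by (rule key)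
    also have "\<dots> = ((\<bar>\<theta>\<bar> / d)^2 * c^2) * (N * M)" unfolding c2 using Npos Mpos cdist(2) by (simp add: field_simps power_divide)
    finally show ?thesis using NMpos by (rule mult_right_le_imp_le)
  qed
  then have "arccos c \<le> \<bar>\<theta>\<bar> / d" using c0 c1 cdist(2) by (intro arccos_bound) auto
  moreover have "dihedral_angle P P1 = arccos c"
    unfolding dihedral_angle_def Let_def c_def B_def N_def M_def
    by (simp add: n_def[symmetric] m_def[symmetric] mink_sym[of m n])
  ultimately show ?thesis by simp
qed

end
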